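(* For every positive integer $n$, $$\operatorname{lcm}\left({n\brack 0}_q,{n\brack 1}_q,\ldots,{n\brack n}_q\right)=\frac{\operatorname{lcm}([1]_q,[2]_q,\ldots,[n+1]_q)}{[n+1]_q},$$ where both least common multiples are taken in $\mathbb{Z}[q]$. *)

theory Defs
  imports "HOL-Computational_Algebra.Computational_Algebra"
begin

definition qint :: "nat \<Rightarrow> int poly" where
  "qint k = (\<Sum>i<k. monom 1 i)"

definition qfact :: "nat \<Rightarrow> int poly" where
  "qfact n = (\<Prod>k\<in>{1..n}. qint k)"

text \<open>Gaussian binomial coefficient [n]_q! / ([k]_q! [n-k]_q!) (exact division in Z[q]).\<close>
definition qbinom :: "nat \<Rightarrow> nat \<Rightarrow> int poly" where
  "qbinom n k = (if k \<le> n then qfact n div (qfact k * qfact (n - k)) else 0)"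

end

theory Submission
  imports Defs
begin

abbreviation X :: "int poly" where "X \<equiv> monom 1 1"

lemma monom_pow': "X ^ i = monom (1::int) i"
  by (induction i) (auto simp: mult_monom)
lemma monom_pow: "monom (1::int) i = X ^ i" by (rule monom_pow'[symmetric])

lemma qint_alt: "qint m = (\<Sum>i<m. X ^ i)"
  unfolding qint_def by (intro sum.cong refl monom_pow)

lemma qint_add: "qint (a + b) = qint a + X ^ a * qint b"
  unfolding qint_alt by (induction b) (auto simp: algebra_simps power_add)

lemma qint_0 [simp]: "qint 0 = 0" by (simp add: qint_def)
lemma qint_1 [simp]: "qint 1 = 1" by (simp add: qint_def)

lemma poly_qint_0: "m \<ge> 1 \<Longrightarrow> poly (qint m) 0 = 1"
proof (induction m rule: dec_induct)
  case base then show ?case by (simp add: qint_def)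
next
  case (step m)
  have "qint (Suc m) = qint m + X ^ m * qint 1" using qint_add[of m 1] by simp
  with step show ?case by (simp add: poly_monom)
qed

lemma qint_nz: "m \<ge> 1 \<Longrightarrow> qint m \<noteq> 0"
  using poly_qint_0 by force

lemma qint_geom: "X ^ d - 1 = (X - 1) * qint d"
  unfolding qint_alt by (rule power_diff_1_eq)

lemma prime_not_dvd_X:
  assumes p: "prime p" and dv: "p dvd qint b" and b: "b \<ge> 1"
  shows "\<not> p dvd X"
proof
  assume h: "p dvd X"
  have "qint b = qint (1 + (b - 1))" using b by simp
  also have "\<dots> = 1 + X * qint (b - 1)" by (metis qint_add qint_1 power_one_right)
  finally have "1 = qint b - X * qint (b - 1)" by simp
  moreover have "p dvd qint b - X * qint (b - 1)" using dv h by (simp add: dvd_diff)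
  ultimately have "p dvd 1" by simp
  with p show False by (simp add: prime_def prime_elem_def)
qed

lemma prime_dvd_qint_add:
  "p dvd qint a \<Longrightarrow> p dvd qint b \<Longrightarrow> p dvd qint (a + b)"
  by (simp add: qint_add)

lemma prime_dvd_qint_diff:
  assumes p: "prime p" and "p dvd qint a" "p dvd qint b" "b \<le> a"
  shows "p dvd qint (a - b)"
proof (cases "b = 0")
  case True with assms show ?thesis by simp
next
  case False
  have nX: "\<not> p dvd X ^ b" using prime_not_dvd_X[OF p assms(3)] False p
    by (meson linorder_not_le less_one prime_dvd_power)
  have "qint a = qint b + X ^ b * qint (a - b)" using qint_add[of b "a - b"] assms by simp
  hence "p dvd X ^ b * qint (a - b)" using assms by (metis add_diff_cancel_left' dvd_diff)
  thus ?thesis using nX p by (simp add: prime_dvd_mult_iff)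
qed

lemma prime_dvd_qint_mult:
  assumes "p dvd qint d" shows "p dvd qint (d * k)"
proof (induction k)
  case (Suc k)
  then show ?case using prime_dvd_qint_add[OF Suc assms] by (simp add: add.commute)
qed simp

lemma prime_dvd_qint_iff:
  assumes p: "prime p" and d: "d \<ge> 1" "p dvd qint d"
    and least: "\<And>m. m \<ge> 1 \<Longrightarrow> m < d \<Longrightarrow> \<not> p dvd qint m"
  shows "p dvd qint m \<longleftrightarrow> d dvd m"
proof
  assume h: "p dvd qint m"
  have "m = d * (m div d) + m mod d" by simp
  have "p dvd qint (m - d * (m div d))"
    by (rule prime_dvd_qint_diff[OF p h prime_dvd_qint_mult[OF d(2)]]) simp
  hence "p dvd qint (m mod d)" by (simp add: minus_mult_div_eq_mod)
  moreover have "m mod d < d" using d by simp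
  ultimately have "m mod d = 0" using least by (metis less_one not_le)
  thus "d dvd m" by auto
next
  assume "d dvd m" thus "p dvd qint m" using prime_dvd_qint_mult[OF d(2)] by auto
qed

lemma qint_mult: "qint (d * j) = qint d * (\<Sum>i<j. (X ^ d) ^ i)"
proof (induction j)
  case (Suc j)
  have "qint (d * Suc j) = qint (d * j) + X ^ (d * j) * qint d"
    by (metis mult_Suc_right add.commute qint_add)
  also have "\<dots> = qint d * (\<Sum>i<Suc j. (X ^ d) ^ i)"
    using Suc by (simp add: algebra_simps power_mult)
  finally show ?case .
qed simp

lemma prime_not_dvd_geom:
  assumes p: "prime p" and d: "p dvd qint d" and d1: "d \<ge> 1" and j: "j \<ge> 1"
  shows "\<not> p dvd (\<Sum>i<j. (X ^ d) ^ i)"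
proof
  assume h: "p dvd (\<Sum>i<j. (X ^ d) ^ i)"
  have "qint d dvd (\<Sum>i<j. ((X ^ d) ^ i - 1))"
  proof (rule dvd_sum)
    fix i
    have "(X ^ d) ^ i - 1 = (X ^ d - 1) * (\<Sum>k<i. (X ^ d) ^ k)" by (rule power_diff_1_eq)
    also have "\<dots> = qint d * ((X - 1) * (\<Sum>k<i. (X ^ d) ^ k))" unfolding qint_geom by (simp add: ac_simps)
    finally show "qint d dvd (X ^ d) ^ i - 1" by simp
  qed
  hence "p dvd (\<Sum>i<j. ((X ^ d) ^ i - 1))" using d dvd_trans by blast
  moreover have "(\<Sum>i<j. ((X ^ d) ^ i - 1)) = (\<Sum>i<j. (X ^ d) ^ i) - of_nat j"
    by (simp add: sum_subtractf)
  ultimately have h2: "p dvd (\<Sum>i<j. (X ^ d) ^ i) - of_nat j" by simp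
  have "of_nat j = (\<Sum>i<j. (X ^ d) ^ i) - ((\<Sum>i<j. (X ^ d) ^ i) - of_nat j)" by simp
  hence "p dvd of_nat j" using h h2 by (metis dvd_diff)
  moreover have "(of_nat j :: int poly) \<noteq> 0" using j by simp
  ultimately have "degree p \<le> degree (of_nat j :: int poly)" by (rule dvd_imp_degree_le)
  hence "degree p = 0" by (simp add: of_nat_poly)
  then obtain c where pc: "p = [:c:]" by (meson degree_eq_zeroE)
  have "d \<noteq> 0" using d1 by simp
  then obtain r where "qint d = p * r" using d by blast
  hence "poly (qint d) 0 = c * poly r 0" using pc by simp
  moreover have "poly (qint d) 0 = 1" using poly_qint_0[of d] \<open>d \<noteq> 0\<close> by simp
  ultimately have "1 = c * poly r 0" by simp
  hence "c dvd 1" by (metis dvd_triv_left)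
  hence "is_unit p" using pc by (simp add: is_unit_const_poly_iff)
  thus False using p by simp
qed

lemma prime_qint_char:
  assumes p: "prime p"
  shows "\<exists>d e. d \<ge> 1 \<and> (\<forall>m\<ge>1. multiplicity p (qint m) = (if d dvd m then e else 0))"
proof (cases "\<exists>m. m \<ge> 1 \<and> p dvd qint m")
  case False
  then show ?thesis by (intro exI[of _ 1] exI[of _ 0]) (auto intro: not_dvd_imp_multiplicity_0)
next
  case True
  define d where "d = (LEAST m. m \<ge> 1 \<and> p dvd qint m)"
  have dd: "d \<ge> 1 \<and> p dvd qint d" unfolding d_def by (rule LeastI_ex) (rule True)
  have least: "\<And>m. m \<ge> 1 \<Longrightarrow> m < d \<Longrightarrow> \<not> p dvd qint m"
    unfolding d_def using not_less_Least by blast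
  have iff: "\<And>m. p dvd qint m \<longleftrightarrow> d dvd m"
    using prime_dvd_qint_iff[OF p _ _ least] dd by blast
  show ?thesis
  proof (rule exI[of _ d], rule exI[of _ "multiplicity p (qint d)"], intro conjI allI impI)
    show "d \<ge> 1" using dd by simp
    fix m :: nat assume m: "m \<ge> 1"
    show "multiplicity p (qint m) = (if d dvd m then multiplicity p (qint d) else 0)"
    proof (cases "d dvd m")
      case True
      then obtain j where j: "m = d * j" by blast
      with m have j1: "j \<ge> 1" by (cases j) auto
      have "qint d * (\<Sum>i<j. (X ^ d) ^ i) = qint m" unfolding j by (rule qint_mult[symmetric])
      hence nz: "qint d * (\<Sum>i<j. (X ^ d) ^ i) \<noteq> 0" using qint_nz[OF m] by simp
      hence nz1: "qint d \<noteq> 0" and nz2: "(\<Sum>i<j. (X ^ d) ^ i) \<noteq> 0" by auto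
      have "multiplicity p (qint m) = multiplicity p (qint d) + multiplicity p (\<Sum>i<j. (X ^ d) ^ i)"
        unfolding j qint_mult using p nz1 nz2 by (simp add: prime_elem_multiplicity_mult_distrib)
      also have "multiplicity p (\<Sum>i<j. (X ^ d) ^ i) = 0"
        by (rule not_dvd_imp_multiplicity_0[OF prime_not_dvd_geom[OF p _ _ j1]]) (use dd in auto)
      finally show ?thesis using True by simp
    next
      case False
      then show ?thesis using iff by (simp add: not_dvd_imp_multiplicity_0)
    qed
  qed
qed


lemma b_le1:
  fixes n k d :: nat assumes "d \<ge> 1" "k \<le> n"
  shows "n div d - k div d - (n - k) div d = (k mod d + (n - k) mod d) div d"
proof -
  have "n div d = k div d + (n - k) div d + (k mod d + (n - k) mod d) div d"
    using div_add1_eq[of k "n - k" d] assms by simp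
  thus ?thesis by simp
qed

lemma b_le:
  fixes n k d :: nat assumes d: "d \<ge> 1" and k: "k \<le> n"
  shows "n div d - k div d - (n - k) div d \<le> (if d \<le> n \<and> \<not> d dvd Suc n then 1 else 0)"
proof -
  define r1 where "r1 = k mod d"
  define r2 where "r2 = (n - k) mod d"
  have b: "n div d - k div d - (n - k) div d = (r1 + r2) div d" unfolding r1_def r2_def by (rule b_le1[OF d k])
  have r1: "r1 < d" and r2: "r2 < d" using d by (auto simp: r1_def r2_def)
  have b1: "(r1 + r2) div d \<le> 1"
  proof -
    have "r1 + r2 < 2 * d" using r1 r2 by simp
    hence "(r1 + r2) div d < 2" by (simp add: div_less_iff_less_mult mult.commute)
    thus ?thesis by simp
  qed
  have mod: "(r1 + r2) mod d = n mod d"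
    unfolding r1_def r2_def using k by (metis mod_add_eq le_add_diff_inverse)
  show ?thesis
  proof (cases "d \<le> n \<and> \<not> d dvd Suc n")
    case True then show ?thesis using b b1 by simp
  next
    case False
    hence "\<not> d \<le> n \<or> d dvd Suc n" by blast
    hence "(r1 + r2) div d = 0"
    proof
      assume "\<not> d \<le> n"
      hence "r1 = k" "r2 = n - k" using k by (auto simp: r1_def r2_def)
      thus ?thesis using \<open>\<not> d \<le> n\<close> k by simp
    next
      assume "d dvd Suc n"
      hence "Suc n mod d = 0" by simp
      hence nm: "n mod d = d - 1" using d
        using mod_Suc[of n d] by (auto split: if_splits)
      show ?thesis
      proof (rule ccontr)
        assume "(r1 + r2) div d \<noteq> 0"
        hence "(r1 + r2) div d = 1" using b1 by simp
        hence "r1 + r2 = d + (r1 + r2) mod d" by (metis div_mult_mod_eq mult_1 add.commute)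
        thus False using mod nm r1 r2 by simp
      qed
    qed
    thus ?thesis using b False by simp
  qed
qed

lemma b_eq:
  fixes n d :: nat assumes d: "d \<ge> 1" and c: "d \<le> n" "\<not> d dvd Suc n"
  shows "n div d - (d - 1) div d - (n - (d - 1)) div d = 1"
proof -
  have b: "n div d - (d - 1) div d - (n - (d - 1)) div d = ((d - 1) mod d + (n - (d - 1)) mod d) div d"
    by (rule b_le1) (use d c in auto)
  have "(d - 1) mod d = d - 1" using d by simp
  moreover have "n - (d - 1) = Suc n - d" using d c by simp
  moreover have "(Suc n - d) mod d = Suc n mod d" using c by (simp add: mod_if le_mod_geq)
  moreover have "Suc n mod d \<noteq> 0" using c(2) by (metis dvd_eq_mod_eq_0)
  moreover have "Suc n mod d < d" using d by simp
  ultimately have "d \<le> (d - 1) mod d + (n - (d - 1)) mod d"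
       "(d - 1) mod d + (n - (d - 1)) mod d < 2 * d" by auto
  hence "((d - 1) mod d + (n - (d - 1)) mod d) div d = 1"
  proof -
    fix t assume t: "d \<le> t" "t < 2 * d"
    have "t div d = Suc ((t - d) div d)" using le_div_geq[of d t] t d by simp
    moreover have "(t - d) div d = 0" using t by simp
    ultimately show "t div d = 1" by simp
  qed
  thus ?thesis using b by simp
qed


lemma qfact_Suc: "qfact (Suc n) = qfact n * qint (Suc n)"
  unfolding qfact_def by (simp add: atLeastAtMostSuc_conv mult.commute)

lemma qfact_nz: "qfact n \<noteq> 0"
  unfolding qfact_def using qint_nz by (auto simp: prod_zero_iff)

lemma mult_qfact:
  assumes p: "prime p" and H: "\<forall>m\<ge>1. multiplicity p (qint m) = (if d dvd m then e else 0)"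
  shows "multiplicity p (qfact n) = e * (n div d)"
proof (induction n)
  case 0 then show ?case by (simp add: qfact_def)
next
  case (Suc n)
  have "multiplicity p (qfact (Suc n)) = multiplicity p (qfact n) + multiplicity p (qint (Suc n))"
    unfolding qfact_Suc using p qfact_nz qint_nz[of "Suc n"]
    by (simp add: prime_elem_multiplicity_mult_distrib)
  also have "\<dots> = e * (Suc n div d)" using Suc H by (auto simp: div_Suc dvd_eq_mod_eq_0)
  finally show ?case .
qed

lemma qfact_dvd:
  assumes "k \<le> n" shows "qfact k * qfact (n - k) dvd qfact n"
proof (rule multiplicity_le_imp_dvd)
  show "qfact k * qfact (n - k) \<noteq> 0" using qfact_nz by simp
  fix p :: "int poly" assume p: "prime p"
  obtain d e where d: "d \<ge> 1" and H: "\<forall>m\<ge>1. multiplicity p (qint m) = (if d dvd m then e else 0)"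
    using prime_qint_char[OF p] by blast
  have "k div d + (n - k) div d \<le> n div d"
    using div_add1_eq[of k "n - k" d] assms by simp
  hence "e * (k div d) + e * ((n - k) div d) \<le> e * (n div d)"
    by (metis add_mult_distrib2 mult_le_mono2)
  thus "multiplicity p (qfact k * qfact (n - k)) \<le> multiplicity p (qfact n)"
    using p qfact_nz by (simp add: prime_elem_multiplicity_mult_distrib mult_qfact[OF p H])
qed

lemma qbinom_eq: "k \<le> n \<Longrightarrow> qbinom n k * (qfact k * qfact (n - k)) = qfact n"
  unfolding qbinom_def using qfact_dvd by simp

lemma qbinom_nz: "k \<le> n \<Longrightarrow> qbinom n k \<noteq> 0"
  using qbinom_eq[of k n] qfact_nz by force

lemma mult_qbinom:
  assumes p: "prime p" and H: "\<forall>m\<ge>1. multiplicity p (qint m) = (if d dvd m then e else 0)"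
    and k: "k \<le> n"
  shows "multiplicity p (qbinom n k) = e * (n div d - k div d - (n - k) div d)"
proof -
  have "multiplicity p (qfact n) = multiplicity p (qbinom n k) + (multiplicity p (qfact k) + multiplicity p (qfact (n - k)))"
    unfolding qbinom_eq[OF k, symmetric] using p qfact_nz qbinom_nz[OF k]
    by (simp add: prime_elem_multiplicity_mult_distrib)
  thus ?thesis unfolding mult_qfact[OF p H] diff_mult_distrib2 by linarith
qed

lemma mult_lcm:
  fixes a b :: "int poly"
  assumes p: "prime p" and "a \<noteq> 0" "b \<noteq> 0"
  shows "multiplicity p (lcm a b) = max (multiplicity p a) (multiplicity p b)"
proof -
  have "multiplicity p (lcm a b) = count (prime_factorization (lcm a b)) p"
    using p by (simp add: count_prime_factorization_prime)
  also have "\<dots> = count (prime_factorization a \<union># prime_factorization b) p"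
    using assms by (subst prime_factorization_lcm) auto
  also have "\<dots> = max (count (prime_factorization a) p) (count (prime_factorization b) p)"
    by simp
  also have "\<dots> = max (multiplicity p a) (multiplicity p b)"
    using p by (simp only: count_prime_factorization_prime)
  finally show ?thesis .
qed

lemma mult_Lcm:
  fixes A :: "int poly set"
  assumes p: "prime p" and "finite A" "A \<noteq> {}" "0 \<notin> A"
  shows "multiplicity p (Lcm A) = Max ((multiplicity p) ` A)"
  using assms(2-4)
proof (induction A rule: finite_ne_induct)
  case (singleton x) then show ?case by simp
next
  case (insert x F)
  have "Lcm F \<noteq> 0" using insert by (simp add: Lcm_0_iff)
  then show ?case using insert p by (simp add: mult_lcm)
qed

lemma lead_qint: "lead_coeff (qint (Suc m)) = 1"
proof (induction m)
  case 0 then show ?case by (simp add: qint_def)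
next
  case (Suc m)
  have "qint (Suc (Suc m)) = qint 1 + X ^ 1 * qint (Suc m)" by (metis qint_add plus_1_eq_Suc)
  also have "\<dots> = pCons 1 (qint (Suc m))"
  proof -
    have "qint 1 = pCons 1 0" by (simp add: qint_def)
    thus ?thesis by (simp add: monom_Suc)
  qed
  finally show ?case using Suc qint_nz[of "Suc m"] by simp
qed

lemma normalize_qint: "normalize (qint (Suc m)) = qint (Suc m)"
  using lead_qint[of m] by (simp add: normalize_poly_def pCons_one)


theorem theorem2:
  fixes n :: nat
  assumes "n \<ge> 1"
  shows "Lcm ((\<lambda>k. qbinom n k) ` {0..n}) = Lcm (qint ` {1..n+1}) div qint (n + 1)"
proof -
  define L where "L = Lcm (qint ` {1..n+1})"
  define Q where "Q = qint (n + 1)"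
  define Y where "Y = L div Q"
  define S where "S = (\<lambda>k. qbinom n k) ` {0..n}"
  have QL: "Q dvd L" unfolding Q_def L_def by (rule dvd_Lcm) simp
  have LQY: "L = Q * Y" unfolding Y_def using QL by simp
  have Lnz: "L \<noteq> 0" unfolding L_def using qint_nz by (auto simp: Lcm_0_iff)
  have Qnz: "Q \<noteq> 0" unfolding Q_def using qint_nz by simp
  have Ynz: "Y \<noteq> 0" using LQY Lnz by auto
  have Snz: "Lcm S \<noteq> 0" unfolding S_def using qbinom_nz by (auto simp: Lcm_0_iff)
  have nQ: "normalize Q = Q" unfolding Q_def using normalize_qint[of n] by simp
  have "Q * Y = Q * normalize Y"
    using LQY nQ by (metis L_def normalize_Lcm normalize_mult)
  hence nY: "normalize Y = Y" using Qnz by simp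
  have "normalize (Lcm S) = normalize Y"
  proof (rule multiplicity_eq_imp_eq[OF Snz Ynz])
    fix p :: "int poly" assume p: "prime p"
    obtain d e where d: "d \<ge> 1" and H: "\<forall>m\<ge>1. multiplicity p (qint m) = (if d dvd m then e else 0)"
      using prime_qint_char[OF p] by blast
    define c where "c = (if d \<le> n \<and> \<not> d dvd Suc n then 1 else 0 :: nat)"
    have S0: "0 \<notin> S"
    proof
      assume "0 \<in> S"
      then obtain k where "k \<le> n" "qbinom n k = 0" unfolding S_def by auto
      thus False using qbinom_nz by blast
    qed
    have "multiplicity p (Lcm S) = Max (multiplicity p ` S)"
      by (rule mult_Lcm[OF p _ _ S0]) (simp_all add: S_def)
    also have "\<dots> = Max ((\<lambda>k. multiplicity p (qbinom n k)) ` {0..n})"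
      unfolding S_def image_image ..
    also have "\<dots> = e * c"
    proof (rule Max_eqI)
      show "finite ((\<lambda>k. multiplicity p (qbinom n k)) ` {0..n})" by simp
      fix y assume "y \<in> (\<lambda>k. multiplicity p (qbinom n k)) ` {0..n}"
      then obtain k where k: "k \<le> n" and y: "y = multiplicity p (qbinom n k)" by auto
      have bc: "n div d - k div d - (n - k) div d \<le> c" unfolding c_def by (rule b_le[OF d k])
      show "y \<le> e * c" unfolding y mult_qbinom[OF p H k] by (rule mult_le_mono2[OF bc])
    next
      show "e * c \<in> (\<lambda>k. multiplicity p (qbinom n k)) ` {0..n}"
      proof (cases "d \<le> n \<and> \<not> d dvd Suc n")
        case True
        have "d \<le> n" using True by blast
        hence k: "d - 1 \<le> n" by linarith
        have b1: "n div d - (d - 1) div d - (n - (d - 1)) div d = 1" using b_eq[OF d] True by blast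
        have c1: "c = 1" using True by (simp add: c_def)
        have ec: "e * c = multiplicity p (qbinom n (d - 1))"
          unfolding mult_qbinom[OF p H k] b1 c1 ..
        show ?thesis by (rule image_eqI[where x="d - 1"]) (use ec k in simp_all)
      next
        case False
        hence c0: "c = 0" by (simp add: c_def)
        have ec: "e * c = multiplicity p (qbinom n 0)"
          using mult_qbinom[OF p H, of 0 n] c0 by simp
        show ?thesis by (rule image_eqI[where x="0"]) (use ec in simp_all)
      qed
    qed
    finally have m1: "multiplicity p (Lcm S) = e * c" .
    have L0: "0 \<notin> qint ` {1..n+1}"
    proof
      assume "0 \<in> qint ` {1..n+1}"
      then obtain m where "m \<ge> 1" "qint m = 0" by auto
      thus False using qint_nz by blast
    qed
    have "multiplicity p L = Max (multiplicity p ` qint ` {1..n+1})"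
      unfolding L_def by (rule mult_Lcm[OF p _ _ L0]) simp_all
    also have "\<dots> = Max ((\<lambda>m. multiplicity p (qint m)) ` {1..n+1})"
      unfolding image_image ..
    also have "\<dots> = (if d \<le> n + 1 then e else 0)"
    proof (rule Max_eqI)
      show "finite ((\<lambda>m. multiplicity p (qint m)) ` {1..n+1})" by simp
      fix y assume "y \<in> (\<lambda>m. multiplicity p (qint m)) ` {1..n+1}"
      then obtain m where m: "1 \<le> m" "m \<le> n + 1" and y: "y = multiplicity p (qint m)" by auto
      have "d dvd m \<Longrightarrow> d \<le> n + 1" using dvd_imp_le[of d m] m by linarith
      thus "y \<le> (if d \<le> n + 1 then e else 0)" unfolding y using H m by simp
    next
      show "(if d \<le> n + 1 then e else 0) \<in> (\<lambda>m. multiplicity p (qint m)) ` {1..n+1}"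
      proof (cases "d \<le> n + 1")
        case True
        have "multiplicity p (qint d) = e" using H d by simp
        then show ?thesis by (intro image_eqI[where x=d]) (use True d in simp_all)
      next
        case False
        hence "\<not> d dvd 1" using assms by auto
        hence "multiplicity p (qint 1) = 0" using H by simp
        then show ?thesis by (intro image_eqI[where x=1]) (use False in simp_all)
      qed
    qed
    finally have mL: "multiplicity p L = (if d \<le> n + 1 then e else 0)" .
    have mQ: "multiplicity p Q = (if d dvd n + 1 then e else 0)" unfolding Q_def using H by simp
    have "multiplicity p L = multiplicity p Q + multiplicity p Y"
      using LQY p Qnz Ynz by (simp add: prime_elem_multiplicity_mult_distrib)
    hence "multiplicity p Y = (if d \<le> n + 1 then e else 0) - (if d dvd n + 1 then e else 0)"
      using mL mQ by simp
    also have "\<dots> = e * c"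
    proof (cases "d dvd n + 1")
      case True
      hence "d \<le> n + 1" using dvd_imp_le[of d "n+1"] by simp
      thus ?thesis using True by (simp add: c_def)
    next
      case False
      hence "d \<noteq> n + 1" by auto
      thus ?thesis using False by (auto simp: c_def)
    qed
    finally show "multiplicity p (Lcm S) = multiplicity p Y" using m1 by simp
  qed
  hence "Lcm S = Y" using nY by simp
  thus ?thesis unfolding S_def Y_def L_def Q_def .
qed

end
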